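(* Let $i\ge 2$ be an integer and let $f^{[i]}_n$ ($n\ge 1$) be the $i$-Fibonacci words. Then for every $n\ge 1$, $$X^{[i]}\big(f^{[i]}_n\big)=f^{[i]}_{n+1}.$$
   Context: For an integer $i\ge 2$, the $i$-Fibonacci words are finite words over the alphabet $\{0,1\}$ defined by $f^{[i]}_1=0$, $f^{[i]}_2=0^{i-1}1$ (where $0^{i-1}$ denotes $i-1$ consecutive $0$'s), and $f^{[i]}_n=f^{[i]}_{n-1}f^{[i]}_{n-2}$ (concatenation) for $n\ge 3$. The substitution $X^{[i]}$ acts on words that are written as concatenations of the two blocks $0$ and $0^{i-1}1$. Such a decomposition, when it exists, is unique: each letter $1$ forms a block together with the $i-1$ zeros immediately preceding it, and every other $0$ is a block by itself. $X^{[i]}$ replaces each block independently: the block $0$ is replaced by $0^{i-1}1$, and the block $0^{i-1}1$ is replaced by $0^{i-1}10$. The result is again a concatenation of such blocks. In the statement, $X^{[i]}$ is applied to $f^{[i]}_n$ written in its block decomposition. *)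

theory Defs
  imports Main
begin

text \<open>Words over the alphabet {0,1} are lists of naturals.\<close>

fun fibw :: "nat \<Rightarrow> nat \<Rightarrow> nat list" where
  "fibw i 0 = []"
| "fibw i (Suc 0) = [0]"
| "fibw i (Suc (Suc 0)) = replicate (i - 1) 0 @ [1]"
| "fibw i (Suc (Suc (Suc n))) = fibw i (Suc (Suc n)) @ fibw i (Suc n)"

datatype block = A | B

fun block_word :: "nat \<Rightarrow> block \<Rightarrow> nat list" where
  "block_word i A = [0]"
| "block_word i B = replicate (i - 1) 0 @ [1]"

text \<open>Image of a block under the substitution X^[i]:
  0 maps to 0^(i-1)1, and 0^(i-1)1 maps to 0^(i-1)10.\<close>
fun X_block :: "block \<Rightarrow> block list" where
  "X_block A = [B]"
| "X_block B = [B, A]"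

definition is_block_decomp :: "nat \<Rightarrow> block list \<Rightarrow> nat list \<Rightarrow> bool" where
  "is_block_decomp i bs w \<longleftrightarrow> concat (map (block_word i) bs) = w"

text \<open>X^[i] applied to w, via its (unique, when existing) block decomposition.\<close>
definition X_subst :: "nat \<Rightarrow> nat list \<Rightarrow> nat list" where
  "X_subst i w = concat (map (block_word i) (concat (map X_block (THE bs. is_block_decomp i bs w))))"

end

theory Submission
  imports Defs
begin

fun fb :: "nat \<Rightarrow> block list" where
  "fb 0 = []"
| "fb (Suc 0) = [A]"
| "fb (Suc (Suc 0)) = [B]"
| "fb (Suc (Suc (Suc n))) = fb (Suc (Suc n)) @ fb (Suc n)"

lemma fb_word: "concat (map (block_word i) (fb n)) = fibw i n"
  by (induction n rule: fb.induct) auto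

lemma fb_X: "n \<ge> 1 \<Longrightarrow> concat (map X_block (fb n)) = fb (Suc n)"
  by (induction n rule: fb.induct) auto

lemma bw_last: "i \<ge> 2 \<Longrightarrow> last (block_word i b) = (case b of A \<Rightarrow> 0 | B \<Rightarrow> 1)"
  by (cases b) auto

lemma bw_ne: "block_word i b \<noteq> []"
  by (cases b) auto

lemma concat_ne: "bs \<noteq> [] \<Longrightarrow> concat (map (block_word i) bs) \<noteq> []"
  by (induction bs) (auto simp: bw_ne)

lemma inj_decomp:
  assumes "i \<ge> 2"
  shows "concat (map (block_word i) bs) = concat (map (block_word i) cs) \<Longrightarrow> bs = cs"
proof (induction bs arbitrary: cs rule: rev_induct)
  case Nil
  then show ?case using concat_ne[of cs i] by auto
next
  case (snoc b bs)
  show ?case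
  proof (cases cs rule: rev_exhaust)
    case Nil
    then show ?thesis using snoc.prems concat_ne[of "bs @ [b]" i] by auto
  next
    case (snoc cs' c)
    have eq: "concat (map (block_word i) bs) @ block_word i b
            = concat (map (block_word i) cs') @ block_word i c"
      using snoc.prems snoc by simp
    have "last (block_word i b) = last (block_word i c)"
      using eq by (metis bw_ne last_appendR)
    hence bc: "b = c" using bw_last[OF assms, of b] bw_last[OF assms, of c]
      by (cases b; cases c) auto
    with eq have "concat (map (block_word i) bs) = concat (map (block_word i) cs')" by simp
    with snoc.IH bc snoc show ?thesis by simp
  qed
qed

theorem proposition2p2:
  fixes i n :: nat
  assumes "i \<ge> 2" and "n \<ge> 1"
  shows "(\<exists>!bs. is_block_decomp i bs (fibw i n)) \<and> X_subst i (fibw i n) = fibw i (Suc n)"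
proof -
  have d: "is_block_decomp i (fb n) (fibw i n)"
    by (simp add: is_block_decomp_def fb_word)
  have u: "bs = fb n" if h: "is_block_decomp i bs (fibw i n)" for bs
  proof -
    have "concat (map (block_word i) bs) = concat (map (block_word i) (fb n))"
      using h by (simp add: is_block_decomp_def fb_word)
    thus ?thesis by (rule inj_decomp[OF assms(1)])
  qed
  have ex: "\<exists>!bs. is_block_decomp i bs (fibw i n)"
    using d u by (rule ex1I)
  have t: "(THE bs. is_block_decomp i bs (fibw i n)) = fb n"
    using d u by (rule the_equality)
  have "X_subst i (fibw i n) = concat (map (block_word i) (fb (Suc n)))"
    unfolding X_subst_def t fb_X[OF assms(2)] ..
  also have "\<dots> = fibw i (Suc n)" by (rule fb_word)
  finally show ?thesis using ex by simp
qed

end
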